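(* Let $V=\{1,\dots,N\}$, $V^{\mathrm{abs}}=\{0,N+1\}$, $V^*=V\cup V^{\mathrm{abs}}$, and let $\{\eta(t),t\ge0\}$ be a consistent configuration process on $V^*$ with generator $\mathcal L^{\mathrm{abs}}=\mathcal L+\mathcal H$. Let $\mathbf x=(x_1,\dots,x_n)\in(V^* )^n$. Then for all $m\in\{1,\dots,n-1\}$, $$\mathbb E_{\phi(\mathbf x)}\Big[\binom{\eta_0(\infty)}{m}\Big]=\sum_{1\le i_1<\dots<i_m\le n}\mathbb P_{\phi(x_{i_1},\dots,x_{i_m})}\big(\eta_0(\infty)=m\big).$$
   Context: Rates $r(i,j)\ge0$ for $i\in V$, $j\in\{0,N+1\}$. $\mathcal L$ generates a configuration process on $V$ (single-site space $\Lambda\subseteq\mathbb N_0$), acting only on $(\eta_i)_{i\in V}$; $\mathcal Hf(\eta)=\sum_{i\in V,j\in V^{\mathrm{abs}}}r(i,j)\eta_i[f(\eta-\delta_i+\delta_j)-f(\eta)]$. Consistency: $[\mathcal L^{\mathrm{abs}},\mathcal A]=0$, $\mathcal Af(\eta)=\sum_{x\in V^*}\eta_xf(\eta-\delta_x)$ (terms with $\eta_x=0$ vanish). $\phi(\mathbf y)=\sum_i\delta_{y_i}$. Quantities at time $\infty$ are limits as $t\to\infty$ of those at time $t$. *)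

theory Defs
  imports Complex_Main
begin

text \<open>Configurations on V* = {0,...,N+1}: functions nat => nat that vanish outside {0..N+1}.
  Bulk V = {1..N}, absorbing sites 0 and N+1.\<close>

type_synonym config = "nat \<Rightarrow> nat"

definition Vbulk :: "nat \<Rightarrow> nat set" where
  "Vbulk N = {1..N}"

definition Vabs :: "nat \<Rightarrow> nat set" where
  "Vabs N = {0, Suc N}"

definition Vstar :: "nat \<Rightarrow> nat set" where
  "Vstar N = {0..Suc N}"

definition Omega :: "nat \<Rightarrow> nat set \<Rightarrow> config set" where
  "Omega N Lam = {\<eta>. (\<forall>i. i \<notin> Vstar N \<longrightarrow> \<eta> i = 0) \<and> (\<forall>i\<in>Vbulk N. \<eta> i \<in> Lam)}"

definition BulkConf :: "nat \<Rightarrow> nat set \<Rightarrow> config set" where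
  "BulkConf N Lam = {\<zeta>. (\<forall>i. i \<notin> Vbulk N \<longrightarrow> \<zeta> i = 0) \<and> (\<forall>i\<in>Vbulk N. \<zeta> i \<in> Lam)}"

definition bulk :: "nat \<Rightarrow> config \<Rightarrow> config" where
  "bulk N \<eta> = (\<lambda>i. if i \<in> Vbulk N then \<eta> i else 0)"

definition glue :: "nat \<Rightarrow> config \<Rightarrow> config \<Rightarrow> config" where
  "glue N \<zeta> \<eta> = (\<lambda>i. if i \<in> Vbulk N then \<zeta> i else \<eta> i)"

definition Lgen :: "(config \<Rightarrow> config \<Rightarrow> real) \<Rightarrow> nat \<Rightarrow> (config \<Rightarrow> real) \<Rightarrow> config \<Rightarrow> real" where
  "Lgen c N f \<eta> = (\<Sum>\<zeta>\<in>{\<zeta>. c (bulk N \<eta>) \<zeta> \<noteq> 0}. c (bulk N \<eta>) \<zeta> * (f (glue N \<zeta> \<eta>) - f \<eta>))"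

definition Hgen :: "(nat \<Rightarrow> nat \<Rightarrow> real) \<Rightarrow> nat \<Rightarrow> (config \<Rightarrow> real) \<Rightarrow> config \<Rightarrow> real" where
  "Hgen r N f \<eta> = (\<Sum>i\<in>Vbulk N. \<Sum>j\<in>Vabs N.
      r i j * real (\<eta> i) * (f ((\<eta>(i := \<eta> i - 1))(j := (\<eta>(i := \<eta> i - 1)) j + 1)) - f \<eta>))"

definition Labs :: "(config \<Rightarrow> config \<Rightarrow> real) \<Rightarrow> (nat \<Rightarrow> nat \<Rightarrow> real) \<Rightarrow> nat
    \<Rightarrow> (config \<Rightarrow> real) \<Rightarrow> config \<Rightarrow> real" where
  "Labs c r N f \<eta> = Lgen c N f \<eta> + Hgen r N f \<eta>"

definition Aop :: "nat \<Rightarrow> (config \<Rightarrow> real) \<Rightarrow> config \<Rightarrow> real" where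
  "Aop N f \<eta> = (\<Sum>x\<in>Vstar N. real (\<eta> x) * f (\<eta>(x := \<eta> x - 1)))"

definition phi :: "nat list \<Rightarrow> config" where
  "phi xs = (\<lambda>i. count_list xs i)"

text \<open>Markov semigroup of the (finite-state, particle-conserving) process generated by Labs:
  E_eta[F(eta(t))] = (exp(t Labs) F)(eta).\<close>
definition Expect :: "(config \<Rightarrow> config \<Rightarrow> real) \<Rightarrow> (nat \<Rightarrow> nat \<Rightarrow> real) \<Rightarrow> nat
    \<Rightarrow> (config \<Rightarrow> real) \<Rightarrow> config \<Rightarrow> real \<Rightarrow> real" where
  "Expect c r N F \<eta> t = (\<Sum>k. t ^ k / fact k * ((Labs c r N) ^^ k) F \<eta>)"

definition Prob :: "(config \<Rightarrow> config \<Rightarrow> real) \<Rightarrow> (nat \<Rightarrow> nat \<Rightarrow> real) \<Rightarrow> nat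
    \<Rightarrow> (config \<Rightarrow> bool) \<Rightarrow> config \<Rightarrow> real \<Rightarrow> real" where
  "Prob c r N P \<eta> t = Expect c r N (\<lambda>\<xi>. if P \<xi> then 1 else 0) \<eta> t"

definition consistent_abs_process ::
    "nat \<Rightarrow> nat set \<Rightarrow> (config \<Rightarrow> config \<Rightarrow> real) \<Rightarrow> (nat \<Rightarrow> nat \<Rightarrow> real) \<Rightarrow> bool" where
  "consistent_abs_process N Lam c r \<longleftrightarrow>
     0 \<in> Lam \<and> (\<forall>a\<in>Lam. \<forall>b\<le>a. b \<in> Lam) \<and>
     (\<forall>\<zeta> \<zeta>'. c \<zeta> \<zeta>' \<ge> 0) \<and>
     (\<forall>\<zeta>. finite {\<zeta>'. c \<zeta> \<zeta>' \<noteq> 0}) \<and>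
     (\<forall>\<zeta> \<zeta>'. c \<zeta> \<zeta>' \<noteq> 0 \<longrightarrow> \<zeta> \<in> BulkConf N Lam \<and> \<zeta>' \<in> BulkConf N Lam) \<and>
     (\<forall>i j. r i j \<ge> 0) \<and>
     (\<forall>f \<eta>. \<eta> \<in> Omega N Lam \<longrightarrow> Labs c r N (Aop N f) \<eta> = Aop N (Labs c r N f) \<eta>)"

end

theory Submission
  imports Defs
begin

definition tot :: "nat \<Rightarrow> config \<Rightarrow> nat" where
  "tot N \<xi> = (\<Sum>x\<in>Vstar N. \<xi> x)"

definition lev :: "nat \<Rightarrow> nat set \<Rightarrow> nat \<Rightarrow> config set" where
  "lev N Lam K = {\<xi>\<in>Omega N Lam. tot N \<xi> = K}"

definition mv :: "config \<Rightarrow> nat \<Rightarrow> nat \<Rightarrow> config" where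
  "mv \<xi> i j = (\<xi>(i := \<xi> i - 1))(j := (\<xi>(i := \<xi> i - 1)) j + 1)"

locale cap =
  fixes N :: nat and Lam :: "nat set" and c :: "config \<Rightarrow> config \<Rightarrow> real" and r :: "nat \<Rightarrow> nat \<Rightarrow> real"
  assumes cons: "consistent_abs_process N Lam c r"
begin

abbreviation "L \<equiv> Labs c r N"
abbreviation "A \<equiv> Aop N"
abbreviation "Om \<equiv> Omega N Lam"
abbreviation "Lv \<equiv> lev N Lam"

lemma Lam0: "0 \<in> Lam" using cons unfolding consistent_abs_process_def by blast
lemma Lam_down: "a \<in> Lam \<Longrightarrow> b \<le> a \<Longrightarrow> b \<in> Lam" using cons unfolding consistent_abs_process_def by blast
lemma c_nn: "c \<zeta> \<zeta>' \<ge> 0" using cons unfolding consistent_abs_process_def by blast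
lemma c_fin: "finite {\<zeta>'. c \<zeta> \<zeta>' \<noteq> 0}" using cons unfolding consistent_abs_process_def by blast
lemma c_bulk: "c \<zeta> \<zeta>' \<noteq> 0 \<Longrightarrow> \<zeta>' \<in> BulkConf N Lam" using cons unfolding consistent_abs_process_def by blast
lemma r_nn: "r i j \<ge> 0" using cons unfolding consistent_abs_process_def by blast
lemma comm: "\<eta> \<in> Om \<Longrightarrow> L (A f) \<eta> = A (L f) \<eta>" using cons unfolding consistent_abs_process_def by blast

lemma Vstar_bulk: "i \<in> Vbulk N \<Longrightarrow> i \<in> Vstar N" by (auto simp: Vbulk_def Vstar_def)
lemma Vstar_abs: "j \<in> Vabs N \<Longrightarrow> j \<in> Vstar N" by (auto simp: Vabs_def Vstar_def)
lemma abs_not_bulk: "j \<in> Vabs N \<Longrightarrow> j \<notin> Vbulk N" by (auto simp: Vabs_def Vbulk_def)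
lemma fin_Vstar[simp]: "finite (Vstar N)" by (simp add: Vstar_def)
lemma fin_Vbulk[simp]: "finite (Vbulk N)" by (simp add: Vbulk_def)
lemma fin_Vabs[simp]: "finite (Vabs N)" by (simp add: Vabs_def)

lemma glue_Om: "\<zeta> \<in> BulkConf N Lam \<Longrightarrow> \<xi> \<in> Om \<Longrightarrow> glue N \<zeta> \<xi> \<in> Om"
  by (auto simp: glue_def Omega_def BulkConf_def Vstar_def Vbulk_def)

lemma dec_Om: "\<xi> \<in> Om \<Longrightarrow> \<xi>(x := \<xi> x - 1) \<in> Om"
  unfolding Omega_def using Lam_down by auto

lemma mv_Om: "\<xi> \<in> Om \<Longrightarrow> i \<in> Vbulk N \<Longrightarrow> j \<in> Vabs N \<Longrightarrow> mv \<xi> i j \<in> Om"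
  unfolding Omega_def mv_def using Lam_down abs_not_bulk Vstar_abs
  by auto

lemma tot_upd: "x \<in> Vstar N \<Longrightarrow> int (tot N (\<xi>(x := v))) = int (tot N \<xi>) - int (\<xi> x) + int v"
proof -
  assume x: "x \<in> Vstar N"
  have "tot N (\<xi>(x := v)) = v + (\<Sum>y\<in>Vstar N - {x}. \<xi> y)"
    unfolding tot_def by (subst sum.remove[OF fin_Vstar x]) (auto intro!: sum.cong)
  moreover have "tot N \<xi> = \<xi> x + (\<Sum>y\<in>Vstar N - {x}. \<xi> y)"
    unfolding tot_def by (subst sum.remove[OF fin_Vstar x]) auto
  ultimately show ?thesis by simp
qed

lemma tot_dec: "x \<in> Vstar N \<Longrightarrow> \<xi> x > 0 \<Longrightarrow> tot N (\<xi>(x := \<xi> x - 1)) = tot N \<xi> - 1 \<and> tot N \<xi> \<ge> 1"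
  using tot_upd[of x \<xi> "\<xi> x - 1"] by auto

lemma tot_mv: "i \<in> Vbulk N \<Longrightarrow> j \<in> Vabs N \<Longrightarrow> \<xi> i > 0 \<Longrightarrow> tot N (mv \<xi> i j) = tot N \<xi>"
proof -
  assume a: "i \<in> Vbulk N" "j \<in> Vabs N" "\<xi> i > 0"
  have ij: "i \<noteq> j" using a abs_not_bulk by blast
  have "int (tot N (mv \<xi> i j)) = int (tot N (\<xi>(i := \<xi> i - 1))) - int (\<xi> j) + int (\<xi> j + 1)"
    unfolding mv_def using tot_upd[OF Vstar_abs[OF a(2)], of "\<xi>(i := \<xi> i - 1)"] ij by simp
  also have "\<dots> = int (tot N \<xi>)" using tot_upd[OF Vstar_bulk[OF a(1)], of \<xi> "\<xi> i - 1"] a by simp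
  finally show ?thesis by simp
qed


lemma L_lin: "L (\<lambda>\<zeta>. a * f \<zeta> + g \<zeta>) \<xi> = a * L f \<xi> + L g \<xi>"
proof -
  have e1: "\<And>x y u v w z. x * ((a * u + v) - (a * w + z)) = a * (x * (u - w)) + x * (v - z)"
    by (simp add: algebra_simps)
  show ?thesis
    unfolding Labs_def Lgen_def Hgen_def e1 sum.distrib sum_distrib_left[symmetric]
    by (simp add: distrib_left)
qed


lemma L_const: "L (\<lambda>\<zeta>. d) \<xi> = 0"
  unfolding Labs_def Lgen_def Hgen_def by simp

lemma L_cmult: "L (\<lambda>\<zeta>. a * f \<zeta>) \<xi> = a * L f \<xi>"
  using L_lin[of a f "\<lambda>_. 0" \<xi>] L_const by simp

lemma L_add: "L (\<lambda>\<zeta>. f \<zeta> + g \<zeta>) \<xi> = L f \<xi> + L g \<xi>"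
  using L_lin[of 1 f g \<xi>] by simp

lemma L_diff: "L (\<lambda>\<zeta>. f \<zeta> - g \<zeta>) \<xi> = L f \<xi> - L g \<xi>"
  using L_lin[of "-1" g f \<xi>] by simp

lemma L_sum: "finite J \<Longrightarrow> L (\<lambda>\<zeta>. \<Sum>j\<in>J. h j \<zeta>) \<xi> = (\<Sum>j\<in>J. L (h j) \<xi>)"
proof (induction J rule: finite_induct)
  case empty then show ?case using L_const by simp
next
  case (insert x F) then show ?case using L_add[of "h x" "\<lambda>\<zeta>. \<Sum>j\<in>F. h j \<zeta>" \<xi>] by simp
qed


definition T :: "config \<Rightarrow> real" where "T \<xi> = real (tot N \<xi>)"

lemma A_one: "A (\<lambda>_. 1) = T"
  by (rule ext) (simp add: Aop_def T_def tot_def)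

lemma A_T: "A T = (\<lambda>\<xi>. T \<xi> * (T \<xi> - 1))"
proof (rule ext)
  fix \<xi>
  have "A T \<xi> = (\<Sum>x\<in>Vstar N. real (\<xi> x) * (T \<xi> - 1))"
    unfolding Aop_def
  proof (rule sum.cong)
    fix x assume x: "x \<in> Vstar N"
    show "real (\<xi> x) * T (\<xi>(x := \<xi> x - 1)) = real (\<xi> x) * (T \<xi> - 1)"
    proof (cases "\<xi> x = 0")
      case False then show ?thesis using tot_dec[OF x, of \<xi>] by (simp add: T_def of_nat_diff)
    qed simp
  qed simp
  also have "\<dots> = T \<xi> * (T \<xi> - 1)" by (simp add: sum_distrib_right[symmetric] T_def tot_def)
  finally show "A T \<xi> = T \<xi> * (T \<xi> - 1)" .
qed

lemma L_T: "\<xi> \<in> Om \<Longrightarrow> L T \<xi> = 0"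
  using comm[of \<xi> "\<lambda>_. 1"] unfolding A_one by (simp add: Aop_def L_const)

lemma L_TT: "\<xi> \<in> Om \<Longrightarrow> L (\<lambda>\<zeta>. T \<zeta> * (T \<zeta> - 1)) \<xi> = 0"
proof -
  assume x: "\<xi> \<in> Om"
  have s: "A (L T) \<xi> = 0" unfolding Aop_def
    by (rule sum.neutral) (use L_T[OF dec_Om[OF x]] in simp)
  show ?thesis using comm[OF x, of T] s unfolding A_T by simp
qed

lemma L_sq: "\<xi> \<in> Om \<Longrightarrow> L (\<lambda>\<zeta>. (T \<zeta> - T \<xi>)^2) \<xi> = 0"
proof -
  assume x: "\<xi> \<in> Om"
  have e: "(\<lambda>\<zeta>. (T \<zeta> - T \<xi>)^2) = (\<lambda>\<zeta>. T \<zeta> * (T \<zeta> - 1) + ((1 - 2 * T \<xi>) * T \<zeta> + T \<xi> ^ 2))"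
    by (rule ext) (simp add: power2_eq_square algebra_simps)
  show ?thesis unfolding e L_add L_lin L_const using L_T[OF x] L_TT[OF x] by (simp add: L_cmult)
qed

lemma conserve: "\<xi> \<in> Om \<Longrightarrow> c (bulk N \<xi>) \<zeta> \<noteq> 0 \<Longrightarrow> tot N (glue N \<zeta> \<xi>) = tot N \<xi>"
proof -
  assume x: "\<xi> \<in> Om" and cz: "c (bulk N \<xi>) \<zeta> \<noteq> 0"
  let ?h = "\<lambda>\<zeta>. (T \<zeta> - T \<xi>)^2"
  let ?S = "{\<zeta>. c (bulk N \<xi>) \<zeta> \<noteq> 0}"
  have H: "Hgen r N ?h \<xi> \<ge> 0" unfolding Hgen_def
    by (intro sum_nonneg) (simp add: r_nn)
  have G: "Lgen c N ?h \<xi> = (\<Sum>\<zeta>\<in>?S. c (bulk N \<xi>) \<zeta> * ?h (glue N \<zeta> \<xi>))"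
    unfolding Lgen_def by simp
  have G0: "Lgen c N ?h \<xi> \<ge> 0" unfolding G by (intro sum_nonneg) (simp add: c_nn)
  have "Lgen c N ?h \<xi> = 0" using L_sq[OF x] H G0 unfolding Labs_def by linarith
  then have "\<forall>z\<in>?S. c (bulk N \<xi>) z * ?h (glue N z \<xi>) = 0"
    unfolding G by (subst (asm) sum_nonneg_eq_0_iff) (auto simp: c_fin c_nn)
  then have "?h (glue N \<zeta> \<xi>) = 0" using cz by auto
  then show ?thesis by (simp add: T_def)
qed

lemma lev_Om: "\<xi> \<in> Lv K \<Longrightarrow> \<xi> \<in> Om" by (simp add: lev_def)
lemma Om_lev: "\<xi> \<in> Om \<Longrightarrow> \<xi> \<in> Lv (tot N \<xi>)" by (simp add: lev_def)

lemma glue_lev: "\<xi> \<in> Lv K \<Longrightarrow> c (bulk N \<xi>) \<zeta> \<noteq> 0 \<Longrightarrow> glue N \<zeta> \<xi> \<in> Lv K"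
  using conserve glue_Om c_bulk unfolding lev_def by auto

lemma mv_lev: "\<xi> \<in> Lv K \<Longrightarrow> i \<in> Vbulk N \<Longrightarrow> j \<in> Vabs N \<Longrightarrow> \<xi> i > 0 \<Longrightarrow> mv \<xi> i j \<in> Lv K"
  using mv_Om tot_mv unfolding lev_def by auto

lemma L_local: "\<xi> \<in> Lv K \<Longrightarrow> (\<And>\<zeta>. \<zeta> \<in> Lv K \<Longrightarrow> f \<zeta> = g \<zeta>) \<Longrightarrow> L f \<xi> = L g \<xi>"
  unfolding Labs_def Lgen_def Hgen_def
  apply (intro arg_cong2[where f="(+)"] sum.cong refl)
  subgoal using glue_lev by auto
  subgoal for i j using mv_lev[of \<xi> K i j] by (cases "\<xi> i = 0") (auto simp: mv_def)
  done

lemma Lk_local_all: assumes "\<And>\<zeta>. \<zeta> \<in> Lv K \<Longrightarrow> f \<zeta> = g \<zeta>"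
  shows "\<forall>\<xi>\<in>Lv K. (L ^^ k) f \<xi> = (L ^^ k) g \<xi>"
proof (induction k)
  case 0 then show ?case using assms by simp
next
  case (Suc k)
  show ?case
  proof
    fix \<xi> assume x: "\<xi> \<in> Lv K"
    have "L ((L ^^ k) f) \<xi> = L ((L ^^ k) g) \<xi>"
      by (rule L_local[OF x]) (use Suc.IH in blast)
    then show "(L ^^ Suc k) f \<xi> = (L ^^ Suc k) g \<xi>" by simp
  qed
qed

lemma Lk_local: "\<xi> \<in> Lv K \<Longrightarrow> (\<And>\<zeta>. \<zeta> \<in> Lv K \<Longrightarrow> f \<zeta> = g \<zeta>) \<Longrightarrow> (L ^^ k) f \<xi> = (L ^^ k) g \<xi>"
  using Lk_local_all by blast

lemma Om_local: "\<xi> \<in> Om \<Longrightarrow> (\<And>\<zeta>. \<zeta> \<in> Om \<Longrightarrow> f \<zeta> = g \<zeta>) \<Longrightarrow> (L ^^ k) f \<xi> = (L ^^ k) g \<xi>"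
proof -
  assume x: "\<xi> \<in> Om" and fg: "\<And>\<zeta>. \<zeta> \<in> Om \<Longrightarrow> f \<zeta> = g \<zeta>"
  show ?thesis by (rule Lk_local[OF Om_lev[OF x]]) (use fg lev_Om in blast)
qed

end


context cap begin

definition rate :: "config \<Rightarrow> real" where
  "rate \<xi> = (\<Sum>\<zeta>\<in>{\<zeta>. c (bulk N \<xi>) \<zeta> \<noteq> 0}. c (bulk N \<xi>) \<zeta>) + (\<Sum>i\<in>Vbulk N. \<Sum>j\<in>Vabs N. r i j * real (\<xi> i))"

definition lam :: "nat \<Rightarrow> real" where "lam K = (\<Sum>\<xi>\<in>Lv K. rate \<xi>)"

lemma rate_nn: "rate \<xi> \<ge> 0"
  unfolding rate_def by (intro add_nonneg_nonneg sum_nonneg) (auto simp: c_nn r_nn)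

lemma fin_lev: "finite (Lv K)"
proof -
  have "Lv K \<subseteq> {f. \<forall>x. (x \<in> {..Suc N} \<longrightarrow> f x \<in> {..K}) \<and> (x \<notin> {..Suc N} \<longrightarrow> f x = 0)}"
  proof
    fix f assume f: "f \<in> Lv K"
    have a: "f x \<in> {..K}" if x: "x \<in> {..Suc N}" for x
    proof -
      have "f x \<le> tot N f" unfolding tot_def by (rule member_le_sum) (use x in \<open>auto simp: Vstar_def\<close>)
      then show ?thesis using f by (simp add: lev_def)
    qed
    have b: "f x = 0" if "x \<notin> {..Suc N}" for x using f that by (auto simp: lev_def Omega_def Vstar_def)
    show "f \<in> {f. \<forall>x. (x \<in> {..Suc N} \<longrightarrow> f x \<in> {..K}) \<and> (x \<notin> {..Suc N} \<longrightarrow> f x = 0)}"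
      using a b by blast
  qed
  moreover have "finite {f. \<forall>x. (x \<in> {..Suc N} \<longrightarrow> f x \<in> {..K}) \<and> (x \<notin> {..Suc N} \<longrightarrow> f x = (0::nat))}"
    by (rule finite_set_of_finite_funs) auto
  ultimately show ?thesis by (rule finite_subset)
qed

lemma rate_le: "\<xi> \<in> Lv K \<Longrightarrow> rate \<xi> \<le> lam K"
  unfolding lam_def by (rule member_le_sum) (auto simp: fin_lev rate_nn)

lemma lam_nn: "lam K \<ge> 0" unfolding lam_def by (intro sum_nonneg rate_nn)

lemma L_expand: "L f \<xi> = (\<Sum>\<zeta>\<in>{\<zeta>. c (bulk N \<xi>) \<zeta> \<noteq> 0}. c (bulk N \<xi>) \<zeta> * f (glue N \<zeta> \<xi>))
   + (\<Sum>i\<in>Vbulk N. \<Sum>j\<in>Vabs N. r i j * real (\<xi> i) * f (mv \<xi> i j)) - rate \<xi> * f \<xi>"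
  unfolding Labs_def Lgen_def Hgen_def rate_def mv_def
  by (simp add: algebra_simps sum_subtractf sum.distrib sum_distrib_right sum_distrib_left)

lemma Hgen_mv: "Hgen r N f \<xi> = (\<Sum>i\<in>Vbulk N. \<Sum>j\<in>Vabs N. r i j * real (\<xi> i) * (f (mv \<xi> i j) - f \<xi>))"
  unfolding Hgen_def mv_def ..

lemma L_bound: assumes x: "\<xi> \<in> Lv K" and B: "\<And>\<zeta>. \<zeta> \<in> Lv K \<Longrightarrow> \<bar>f \<zeta>\<bar> \<le> B"
  shows "\<bar>L f \<xi>\<bar> \<le> 2 * lam K * B"
proof -
  let ?S = "{\<zeta>. c (bulk N \<xi>) \<zeta> \<noteq> 0}"
  have B0: "B \<ge> 0" using B[OF x] by linarith
  have t1: "\<bar>c (bulk N \<xi>) \<zeta> * (f (glue N \<zeta> \<xi>) - f \<xi>)\<bar> \<le> c (bulk N \<xi>) \<zeta> * (2 * B)" if z: "\<zeta> \<in> ?S" for \<zeta>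
  proof -
    have "\<bar>f (glue N \<zeta> \<xi>) - f \<xi>\<bar> \<le> 2 * B" using B[OF glue_lev[OF x]] B[OF x] z by fastforce
    then show ?thesis by (simp add: abs_mult c_nn mult_left_mono)
  qed
  have t2: "\<bar>r i j * real (\<xi> i) * (f (mv \<xi> i j) - f \<xi>)\<bar> \<le> r i j * real (\<xi> i) * (2 * B)"
    if i: "i \<in> Vbulk N" and j: "j \<in> Vabs N" for i j
  proof (cases "\<xi> i = 0")
    case False
    have "\<bar>f (mv \<xi> i j) - f \<xi>\<bar> \<le> 2 * B" using B[OF mv_lev[OF x i j]] B[OF x] False by fastforce
    then show ?thesis by (simp add: abs_mult r_nn mult_left_mono)
  qed simp
  have "\<bar>L f \<xi>\<bar> \<le> \<bar>Lgen c N f \<xi>\<bar> + \<bar>Hgen r N f \<xi>\<bar>" unfolding Labs_def by (rule abs_triangle_ineq)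
  also have "\<bar>Lgen c N f \<xi>\<bar> \<le> (\<Sum>\<zeta>\<in>?S. c (bulk N \<xi>) \<zeta> * (2 * B))"
    unfolding Lgen_def by (rule order_trans[OF sum_abs sum_mono]) (rule t1)
  also have "\<bar>Hgen r N f \<xi>\<bar> \<le> (\<Sum>i\<in>Vbulk N. \<Sum>j\<in>Vabs N. r i j * real (\<xi> i) * (2 * B))"
    unfolding Hgen_mv
    by (rule order_trans[OF sum_abs sum_mono], rule order_trans[OF sum_abs sum_mono]) (rule t2)
  also have "(\<Sum>\<zeta>\<in>?S. c (bulk N \<xi>) \<zeta> * (2 * B)) + (\<Sum>i\<in>Vbulk N. \<Sum>j\<in>Vabs N. r i j * real (\<xi> i) * (2 * B))
     = 2 * B * rate \<xi>"
    unfolding rate_def by (simp add: sum_distrib_left algebra_simps)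
  also have "\<dots> \<le> 2 * B * lam K" using rate_le[OF x] B0 by (simp add: mult_left_mono)
  finally show ?thesis by (simp add: algebra_simps)
qed

lemma Lk_bound: assumes B: "\<And>\<zeta>. \<zeta> \<in> Lv K \<Longrightarrow> \<bar>f \<zeta>\<bar> \<le> B"
  shows "\<forall>\<xi>\<in>Lv K. \<bar>(L ^^ k) f \<xi>\<bar> \<le> (2 * lam K) ^ k * B"
proof (induction k)
  case 0 then show ?case using B by simp
next
  case (Suc k)
  show ?case
  proof
    fix \<xi> assume x: "\<xi> \<in> Lv K"
    have "\<bar>L ((L ^^ k) f) \<xi>\<bar> \<le> 2 * lam K * ((2 * lam K) ^ k * B)"
      by (rule L_bound[OF x]) (use Suc.IH in blast)
    then show "\<bar>(L ^^ Suc k) f \<xi>\<bar> \<le> (2 * lam K) ^ Suc k * B" by (simp add: algebra_simps)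
  qed
qed

lemma bnd_exists: fixes F :: "config \<Rightarrow> real" shows "\<exists>B. \<forall>\<zeta>\<in>Lv K. \<bar>F \<zeta>\<bar> \<le> B"
  by (rule exI[of _ "\<Sum>\<zeta>\<in>Lv K. \<bar>F \<zeta>\<bar>"]) (auto intro!: member_le_sum simp: fin_lev)

lemma summable_gen: fixes a :: "nat \<Rightarrow> real" and t M B :: real assumes "\<And>k. \<bar>a k\<bar> \<le> M ^ k * B"
  shows "summable (\<lambda>k. t ^ k / fact k * a k)"
proof (rule summable_comparison_test)
  show "\<exists>N. \<forall>n\<ge>N. norm (t ^ n / fact n * a n) \<le> B * (inverse (fact n) * (\<bar>t\<bar> * M) ^ n)"
  proof (intro exI allI impI)
    fix n :: nat
    have "\<bar>t ^ n / fact n * a n\<bar> = \<bar>t\<bar> ^ n / fact n * \<bar>a n\<bar>" by (simp add: abs_mult power_abs)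
    also have "\<dots> \<le> \<bar>t\<bar> ^ n / fact n * (M ^ n * B)" by (rule mult_left_mono[OF assms]) simp
    also have "\<dots> = B * (inverse (fact n) * (\<bar>t\<bar> * M) ^ n)" by (simp add: power_mult_distrib field_simps)
    finally show "norm (t ^ n / fact n * a n) \<le> B * (inverse (fact n) * (\<bar>t\<bar> * M) ^ n)" by simp
  qed
  show "summable (\<lambda>n. B * (inverse (fact n) * (\<bar>t\<bar> * M) ^ n))"
    by (rule summable_mult[OF summable_exp])
qed

lemma summ: "\<xi> \<in> Om \<Longrightarrow> summable (\<lambda>k. t ^ k / fact k * (L ^^ k) F \<xi>)"
proof -
  assume x: "\<xi> \<in> Om"
  obtain B where B: "\<forall>\<zeta>\<in>Lv (tot N \<xi>). \<bar>F \<zeta>\<bar> \<le> B" using bnd_exists by blast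
  show ?thesis
    by (rule summable_gen) (use Lk_bound[of "tot N \<xi>" F B] B Om_lev[OF x] in blast)
qed

abbreviation "E F \<xi> t \<equiv> Expect c r N F \<xi> t"

lemma Lk_lin: "(L ^^ k) (\<lambda>\<zeta>. a * F \<zeta> + G \<zeta>) = (\<lambda>\<zeta>. a * (L ^^ k) F \<zeta> + (L ^^ k) G \<zeta>)"
proof (induction k)
  case (Suc k) show ?case by (rule ext) (simp add: Suc L_lin)
qed simp

lemma E_lin: "\<xi> \<in> Om \<Longrightarrow> E (\<lambda>\<zeta>. a * F \<zeta> + G \<zeta>) \<xi> t = a * E F \<xi> t + E G \<xi> t"
proof -
  assume x: "\<xi> \<in> Om"
  have "E (\<lambda>\<zeta>. a * F \<zeta> + G \<zeta>) \<xi> t = (\<Sum>k. a * (t ^ k / fact k * (L ^^ k) F \<xi>) + t ^ k / fact k * (L ^^ k) G \<xi>)"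
    unfolding Expect_def Lk_lin by (simp add: algebra_simps)
  also have "\<dots> = (\<Sum>k. a * (t ^ k / fact k * (L ^^ k) F \<xi>)) + (\<Sum>k. t ^ k / fact k * (L ^^ k) G \<xi>)"
    by (rule suminf_add[symmetric, OF summable_mult[OF summ[OF x]] summ[OF x]])
  also have "\<dots> = a * E F \<xi> t + E G \<xi> t"
    unfolding Expect_def using suminf_mult[OF summ[OF x, of t F], of a] by simp
  finally show ?thesis .
qed

lemma Lk_const: "(L ^^ k) (\<lambda>_. d) = (\<lambda>_. if k = 0 then d else 0)"
proof (induction k)
  case (Suc k) show ?case by (rule ext) (simp add: Suc L_const)
qed simp

lemma E_const: "E (\<lambda>_. d) \<xi> t = d"
proof -
  have "(\<lambda>k. t ^ k / fact k * (L ^^ k) (\<lambda>_. d) \<xi>) = (\<lambda>k. if k = 0 then d else 0)"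
    by (rule ext) (simp add: Lk_const)
  then show ?thesis unfolding Expect_def using sums_unique[OF sums_single[of 0 "\<lambda>_. d"]] by simp
qed

lemma E_local: "\<xi> \<in> Lv K \<Longrightarrow> (\<And>\<zeta>. \<zeta> \<in> Lv K \<Longrightarrow> F \<zeta> = G \<zeta>) \<Longrightarrow> E F \<xi> t = E G \<xi> t"
  unfolding Expect_def using Lk_local[of \<xi> K F G] by simp

lemma E_deriv: assumes x: "\<xi> \<in> Om"
  shows "((\<lambda>t. E F \<xi> t) has_real_derivative E (L F) \<xi> t) (at t)"
proof -
  define a where "a k = (L ^^ k) F \<xi> / fact k" for k
  have e1: "E F \<xi> s = (\<Sum>k. a k * s ^ k)" for s
    unfolding Expect_def a_def by (simp add: field_simps)
  have d: "diffs a k * t ^ k = t ^ k / fact k * (L ^^ k) (L F) \<xi>" for k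
  proof -
    have f: "(fact (Suc k) :: real) = real (Suc k) * fact k" by simp
    have "diffs a k = real (Suc k) * ((L ^^ k) (L F) \<xi> / (real (Suc k) * fact k))"
      unfolding diffs_def a_def f by (simp add: funpow_Suc_right del: funpow.simps of_nat_Suc)
    also have "\<dots> = (L ^^ k) (L F) \<xi> / fact k" by (simp del: of_nat_Suc)
    finally show ?thesis by simp
  qed
  have e2: "E (L F) \<xi> t = (\<Sum>k. diffs a k * t ^ k)"
    unfolding Expect_def d ..
  have "\<And>y. summable (\<lambda>k. a k * y ^ k)"
    using summ[OF x] unfolding a_def by (simp add: field_simps)
  from termdiffs_strong_converges_everywhere[OF this, of t]
  show ?thesis unfolding e1 e2 .
qed

end


lemma pascal_sum:
  fixes x :: real and p :: "nat \<Rightarrow> real"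
  shows "(\<Sum>j\<le>k. real (k choose j) * x ^ (k - j) * (p (Suc j) + x * p j))
       = (\<Sum>j\<le>Suc k. real (Suc k choose j) * x ^ (Suc k - j) * p j)"
proof -
  have s1: "(\<Sum>j\<le>k. real (k choose j) * x ^ (k - j) * (x * p j))
        = (\<Sum>j\<le>Suc k. real (k choose j) * x ^ (Suc k - j) * p j)"
    by (simp add: Suc_diff_le algebra_simps)
  also have "\<dots> = x ^ Suc k * p 0 + (\<Sum>j\<le>k. real (k choose Suc j) * x ^ (k - j) * p (Suc j))"
    by (subst sum.atMost_Suc_shift) simp
  finally have s1': "(\<Sum>j\<le>k. real (k choose j) * x ^ (k - j) * (x * p j))
        = x ^ Suc k * p 0 + (\<Sum>j\<le>k. real (k choose Suc j) * x ^ (k - j) * p (Suc j))" .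
  have "(\<Sum>j\<le>Suc k. real (Suc k choose j) * x ^ (Suc k - j) * p j)
      = x ^ Suc k * p 0 + (\<Sum>j\<le>k. real (Suc k choose Suc j) * x ^ (k - j) * p (Suc j))"
    by (subst sum.atMost_Suc_shift) simp
  also have "\<dots> = x ^ Suc k * p 0 + (\<Sum>j\<le>k. real (k choose j) * x ^ (k - j) * p (Suc j))
        + (\<Sum>j\<le>k. real (k choose Suc j) * x ^ (k - j) * p (Suc j))"
    by (simp add: sum.distrib algebra_simps)
  finally show ?thesis using s1' by (simp add: distrib_left sum.distrib)
qed

context cap begin

definition P :: "nat \<Rightarrow> (config \<Rightarrow> real) \<Rightarrow> config \<Rightarrow> real" where
  "P K f = (\<lambda>\<zeta>. lam K * f \<zeta> + L f \<zeta>)"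

lemma P_nonneg: assumes x: "\<xi> \<in> Lv K" and f: "\<And>\<zeta>. \<zeta> \<in> Lv K \<Longrightarrow> f \<zeta> \<ge> 0"
  shows "P K f \<xi> \<ge> 0"
proof -
  have a1: "(\<Sum>\<zeta>\<in>{\<zeta>. c (bulk N \<xi>) \<zeta> \<noteq> 0}. c (bulk N \<xi>) \<zeta> * f (glue N \<zeta> \<xi>)) \<ge> 0"
    by (intro sum_nonneg) (use glue_lev[OF x] f c_nn in auto)
  have a2: "(\<Sum>i\<in>Vbulk N. \<Sum>j\<in>Vabs N. r i j * real (\<xi> i) * f (mv \<xi> i j)) \<ge> 0"
  proof (intro sum_nonneg)
    fix i j assume i: "i \<in> Vbulk N" and j: "j \<in> Vabs N"
    show "r i j * real (\<xi> i) * f (mv \<xi> i j) \<ge> 0"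
    proof (cases "\<xi> i = 0")
      case False then show ?thesis using f[OF mv_lev[OF x i j]] r_nn by simp
    qed simp
  qed
  have "(lam K - rate \<xi>) * f \<xi> \<ge> 0" using rate_le[OF x] f[OF x] by simp
  then show ?thesis unfolding P_def L_expand using a1 a2 by (simp add: algebra_simps)
qed

lemma Pk_nonneg: assumes f: "\<And>\<zeta>. \<zeta> \<in> Lv K \<Longrightarrow> f \<zeta> \<ge> 0"
  shows "\<forall>\<xi>\<in>Lv K. (P K ^^ j) f \<xi> \<ge> 0"
proof (induction j)
  case 0 then show ?case using f by simp
next
  case (Suc j) then show ?case using P_nonneg by simp
qed

lemma Pk_bound: assumes B: "\<And>\<zeta>. \<zeta> \<in> Lv K \<Longrightarrow> \<bar>f \<zeta>\<bar> \<le> B"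
  shows "\<forall>\<xi>\<in>Lv K. \<bar>(P K ^^ k) f \<xi>\<bar> \<le> (3 * lam K) ^ k * B"
proof (induction k)
  case 0 then show ?case using B by simp
next
  case (Suc k)
  show ?case
  proof
    fix \<xi> assume x: "\<xi> \<in> Lv K"
    let ?g = "(P K ^^ k) f" and ?B = "(3 * lam K) ^ k * B"
    have g: "\<And>\<zeta>. \<zeta> \<in> Lv K \<Longrightarrow> \<bar>?g \<zeta>\<bar> \<le> ?B" using Suc.IH by blast
    have "\<bar>L ?g \<xi>\<bar> \<le> 2 * lam K * ?B" by (rule L_bound[OF x g])
    moreover have "\<bar>lam K * ?g \<xi>\<bar> \<le> lam K * ?B"
      using g[OF x] lam_nn by (simp add: abs_mult mult_left_mono)
    ultimately have "\<bar>P K ?g \<xi>\<bar> \<le> 3 * lam K * ?B" unfolding P_def by linarith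
    then show "\<bar>(P K ^^ Suc k) f \<xi>\<bar> \<le> (3 * lam K) ^ Suc k * B" by (simp add: algebra_simps)
  qed
qed

lemma L_P: "L ((P K ^^ j) F) \<zeta> = (P K ^^ Suc j) F \<zeta> - lam K * (P K ^^ j) F \<zeta>"
  by (simp add: P_def)

lemma Lk_binom: "(L ^^ k) F = (\<lambda>\<zeta>. \<Sum>j\<le>k. real (k choose j) * (- lam K) ^ (k - j) * (P K ^^ j) F \<zeta>)"
proof (induction k)
  case 0 then show ?case by simp
next
  case (Suc k)
  show ?case
  proof
    fix \<zeta>
    have "(L ^^ Suc k) F \<zeta> = L (\<lambda>\<zeta>. \<Sum>j\<le>k. real (k choose j) * (- lam K) ^ (k - j) * (P K ^^ j) F \<zeta>) \<zeta>"
      using Suc by simp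
    also have "\<dots> = (\<Sum>j\<le>k. real (k choose j) * (- lam K) ^ (k - j) * L ((P K ^^ j) F) \<zeta>)"
      by (subst L_sum) (simp_all add: L_cmult)
    also have "\<dots> = (\<Sum>j\<le>k. real (k choose j) * (- lam K) ^ (k - j) * ((P K ^^ Suc j) F \<zeta> + (- lam K) * (P K ^^ j) F \<zeta>))"
      unfolding L_P by simp
    also have "\<dots> = (\<Sum>j\<le>Suc k. real (Suc k choose j) * (- lam K) ^ (Suc k - j) * (P K ^^ j) F \<zeta>)"
      by (rule pascal_sum[of k "- lam K" "\<lambda>j. (P K ^^ j) F \<zeta>"])
    finally show "(L ^^ Suc k) F \<zeta> = (\<Sum>j\<le>Suc k. real (Suc k choose j) * (- lam K) ^ (Suc k - j) * (P K ^^ j) F \<zeta>)" .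
  qed
qed

lemma E_pos: assumes x: "\<xi> \<in> Lv K" and F: "\<And>\<zeta>. \<zeta> \<in> Lv K \<Longrightarrow> F \<zeta> \<ge> 0" and t: "t \<ge> 0"
  shows "E F \<xi> t \<ge> 0"
proof -
  define p where "p j = (P K ^^ j) F \<xi>" for j
  define a where "a j = t ^ j / fact j * p j" for j
  define b where "b i = (- lam K * t) ^ i / fact i" for i
  have p0: "p j \<ge> 0" for j unfolding p_def using Pk_nonneg[of K F j, OF F] x by blast
  obtain B where B: "\<forall>\<zeta>\<in>Lv K. \<bar>F \<zeta>\<bar> \<le> B" using bnd_exists by blast
  have pb: "\<bar>p j\<bar> \<le> (3 * lam K) ^ j * B" for j unfolding p_def using Pk_bound[of K F B] B x by blast
  have sa: "summable (\<lambda>k. norm (a k))"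
  proof -
    have "summable a" unfolding a_def by (rule summable_gen[OF pb])
    moreover have "norm (a k) = a k" for k unfolding a_def using p0[of k] t by simp
    ultimately show ?thesis by simp
  qed
  have sb: "summable (\<lambda>k. norm (b k))"
  proof -
    have "summable (\<lambda>k. \<bar>lam K * t\<bar> ^ k / fact k * 1)" by (rule summable_gen[of _ 1 1]) simp
    moreover have "norm (b k) = \<bar>lam K * t\<bar> ^ k / fact k * 1" for k
      unfolding b_def by (simp add: power_abs)
    ultimately show ?thesis by simp
  qed
  have bexp: "(\<Sum>k. b k) = exp (- lam K * t)"
    unfolding b_def exp_def by (simp add: divide_inverse_commute)
  have trm: "t ^ k / fact k * (L ^^ k) F \<xi> = (\<Sum>i\<le>k. a i * b (k - i))" for k
  proof -
    have "t ^ k / fact k * (L ^^ k) F \<xi> = (\<Sum>j\<le>k. t ^ k / fact k * (real (k choose j) * (- lam K) ^ (k - j) * p j))"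
      unfolding Lk_binom[of k F K] p_def by (simp add: sum_distrib_left)
    also have "\<dots> = (\<Sum>i\<le>k. a i * b (k - i))"
    proof (rule sum.cong)
      fix j assume j: "j \<in> {..k}"
      then have jk: "j \<le> k" by simp
      have tk: "t ^ k = t ^ j * t ^ (k - j)" using jk by (simp add: power_add[symmetric])
      show "t ^ k / fact k * (real (k choose j) * (- lam K) ^ (k - j) * p j) = a j * b (k - j)"
        unfolding a_def b_def binomial_fact[OF jk] tk
        by (simp add: power_mult_distrib[symmetric] field_simps)
    qed simp
    finally show ?thesis .
  qed
  have "E F \<xi> t = (\<Sum>k. \<Sum>i\<le>k. a i * b (k - i))" unfolding Expect_def trm ..
  also have "\<dots> = (\<Sum>k. a k) * (\<Sum>k. b k)" by (rule Cauchy_product[OF sa sb, symmetric])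
  also have "\<dots> \<ge> 0" unfolding bexp
  proof (rule mult_nonneg_nonneg)
    show "(\<Sum>k. a k) \<ge> 0" using sa p0 t unfolding a_def by (intro suminf_nonneg) (simp_all add: summable_rabs_cancel)
  qed simp
  finally show ?thesis .
qed

end


context cap begin

lemma conv: assumes x: "\<eta> \<in> Lv K"
  and g01: "\<And>\<zeta>. \<zeta> \<in> Lv K \<Longrightarrow> g \<zeta> \<ge> 0 \<and> g \<zeta> \<le> 1"
  and Lg: "\<And>\<zeta>. \<zeta> \<in> Lv K \<Longrightarrow> L g \<zeta> \<ge> 0"
  shows "\<exists>l. ((\<lambda>t. E g \<eta> t) \<longlongrightarrow> l) at_top"
proof -
  let ?u = "\<lambda>t. E g \<eta> t"
  have xo: "\<eta> \<in> Om" using x lev_Om by blast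
  have mono: "?u a \<le> ?u b" if ab: "0 \<le> a" "a \<le> b" for a b
  proof (rule DERIV_nonneg_imp_increasing_open[OF ab(2)])
    fix s assume s: "a < s" "s < b"
    show "\<exists>y. ((\<lambda>t. E g \<eta> t) has_real_derivative y) (at s) \<and> y \<ge> 0"
      using E_deriv[OF xo, of g s] E_pos[OF x, of "L g" s] Lg s ab by auto
  next
    show "continuous_on {a..b} ?u"
      by (rule DERIV_continuous_on) (rule has_field_derivative_at_within[OF E_deriv[OF xo]])
  qed
  have le1: "?u t \<le> 1" if t: "t \<ge> 0" for t
  proof -
    have "E (\<lambda>\<zeta>. (-1) * g \<zeta> + 1) \<eta> t \<ge> 0" by (rule E_pos[OF x _ t]) (use g01 in simp)
    then show ?thesis unfolding E_lin[OF xo] E_const by simp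
  qed
  define l where "l = (SUP t\<in>{0..}. ?u t)"
  have bdd: "bdd_above (?u ` {0..})" using le1 by (auto intro!: bdd_aboveI[of _ 1])
  have "(?u \<longlongrightarrow> l) at_top"
  proof (rule order_tendstoI)
    fix a assume "a < l"
    then obtain t0 where t0: "t0 \<in> {0..}" "a < ?u t0" unfolding l_def using less_cSUP_iff[OF _ bdd] by auto
    show "eventually (\<lambda>t. a < ?u t) at_top"
      using eventually_ge_at_top[of t0] by eventually_elim (use t0 mono in force)
  next
    fix a assume a: "l < a"
    show "eventually (\<lambda>t. ?u t < a) at_top"
      using eventually_ge_at_top[of "0::real"]
    proof eventually_elim
      case (elim t)
      have "?u t \<le> l" unfolding l_def by (rule cSUP_upper[OF _ bdd]) (use elim in simp)
      then show ?case using a by simp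
    qed
  qed
  then show ?thesis by blast
qed

lemma A_local: "\<eta> \<in> Om \<Longrightarrow> (\<And>\<zeta>. \<zeta> \<in> Om \<Longrightarrow> f \<zeta> = g \<zeta>) \<Longrightarrow> A f \<eta> = A g \<eta>"
proof -
  assume x: "\<eta> \<in> Om" and fg: "\<And>\<zeta>. \<zeta> \<in> Om \<Longrightarrow> f \<zeta> = g \<zeta>"
  show ?thesis unfolding Aop_def by (intro sum.cong refl) (use fg[OF dec_Om[OF x]] in presburger)
qed

lemma Lk_comm: "\<forall>\<eta>\<in>Om. (L ^^ j) (A G) \<eta> = A ((L ^^ j) G) \<eta>"
proof (induction j)
  case 0 then show ?case by simp
next
  case (Suc j)
  show ?case
  proof
    fix \<eta> assume x: "\<eta> \<in> Om"
    have "L ((L ^^ j) (A G)) \<eta> = L (A ((L ^^ j) G)) \<eta>"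
      by (rule L_local[OF Om_lev[OF x]]) (use Suc.IH lev_Om in blast)
    also have "\<dots> = A (L ((L ^^ j) G)) \<eta>" by (rule comm[OF x])
    finally show "(L ^^ Suc j) (A G) \<eta> = A ((L ^^ Suc j) G) \<eta>" by simp
  qed
qed

lemma E_A: assumes x: "\<eta> \<in> Om" shows "E (A G) \<eta> t = A (\<lambda>\<xi>. E G \<xi> t) \<eta>"
proof -
  have "E (A G) \<eta> t = (\<Sum>k. \<Sum>y\<in>Vstar N. real (\<eta> y) * (t ^ k / fact k * (L ^^ k) G (\<eta>(y := \<eta> y - 1))))"
    unfolding Expect_def using Lk_comm x by (simp add: Aop_def sum_distrib_left algebra_simps)
  also have "\<dots> = (\<Sum>y\<in>Vstar N. \<Sum>k. real (\<eta> y) * (t ^ k / fact k * (L ^^ k) G (\<eta>(y := \<eta> y - 1))))"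
    by (rule suminf_sum) (intro summable_mult summ dec_Om x)
  also have "\<dots> = A (\<lambda>\<xi>. E G \<xi> t) \<eta>"
    unfolding Aop_def Expect_def
    by (intro sum.cong refl suminf_mult summ dec_Om x)
  finally show ?thesis .
qed

lemma E_Ak: "\<forall>\<eta>\<in>Om. E ((A ^^ k) G) \<eta> t = (A ^^ k) (\<lambda>\<xi>. E G \<xi> t) \<eta>"
proof (induction k)
  case 0 then show ?case by simp
next
  case (Suc k)
  show ?case
  proof
    fix \<eta> assume x: "\<eta> \<in> Om"
    have "E (A ((A ^^ k) G)) \<eta> t = A (\<lambda>\<xi>. E ((A ^^ k) G) \<xi> t) \<eta>" by (rule E_A[OF x])
    also have "\<dots> = A ((A ^^ k) (\<lambda>\<xi>. E G \<xi> t)) \<eta>" by (rule A_local[OF x]) (use Suc.IH in blast)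
    finally show "E ((A ^^ Suc k) G) \<eta> t = (A ^^ Suc k) (\<lambda>\<xi>. E G \<xi> t) \<eta>" by simp
  qed
qed

end


definition cf :: "nat list \<Rightarrow> nat set \<Rightarrow> config" where
  "cf xs I = (\<lambda>x. card {i\<in>I. i < length xs \<and> xs ! i = x})"

lemma phi_nths: "phi (nths xs I) = cf xs I"
proof (rule ext)
  fix x
  have "count_list (nths xs I) x = length (filter (\<lambda>p. x = fst p \<and> snd p \<in> I) (zip xs [0..<length xs]))"
    unfolding count_list_eq_length_filter nths_def by (simp add: filter_map filter_filter comp_def conj_commute)
  also have "\<dots> = card {i. i < length xs \<and> x = xs ! i \<and> i \<in> I}"
    unfolding length_filter_conv_card by (intro arg_cong[where f=card] Collect_cong) (auto simp: nth_zip)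
  also have "\<dots> = cf xs I x" unfolding cf_def by (intro arg_cong[where f=card]) auto
  finally show "phi (nths xs I) x = cf xs I x" unfolding phi_def .
qed

lemma phi_cf: "phi xs = cf xs {..<length xs}"
  using phi_nths[of xs "{..<length xs}"] by simp

lemma cf_remove: assumes j: "j \<in> J" "j < length xs"
  shows "cf xs (J - {j}) = (cf xs J)(xs ! j := cf xs J (xs ! j) - 1)"
proof (rule ext)
  fix y
  show "cf xs (J - {j}) y = ((cf xs J)(xs ! j := cf xs J (xs ! j) - 1)) y"
  proof (cases "y = xs ! j")
    case True
    have "{i \<in> J - {j}. i < length xs \<and> xs ! i = y} = {i \<in> J. i < length xs \<and> xs ! i = y} - {j}" by auto
    moreover have "finite {i \<in> J. i < length xs \<and> xs ! i = y}" by simp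
    ultimately show ?thesis using True j unfolding cf_def by (simp add: card_Diff_singleton)
  next
    case False
    then have "{i \<in> J - {j}. i < length xs \<and> xs ! i = y} = {i \<in> J. i < length xs \<and> xs ! i = y}" by auto
    then show ?thesis using False unfolding cf_def by simp
  qed
qed

lemma double_count:
  fixes h :: "nat set \<Rightarrow> real"
  assumes J: "finite J"
  shows "(\<Sum>I\<in>{I. I \<subseteq> J \<and> card I = Suc s}. \<Sum>i\<in>I. h (I - {i}))
       = real (card J - s) * (\<Sum>I\<in>{I. I \<subseteq> J \<and> card I = s}. h I)"
proof -
  let ?S1 = "{I. I \<subseteq> J \<and> card I = Suc s}" and ?S0 = "{I. I \<subseteq> J \<and> card I = s}"
  have f1: "finite ?S1" using J by (auto intro: finite_subset[of _ "Pow J"])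
  have f0: "finite ?S0" using J by (auto intro: finite_subset[of _ "Pow J"])
  have "(\<Sum>I\<in>?S1. \<Sum>i\<in>I. h (I - {i})) = (\<Sum>(I, i)\<in>Sigma ?S1 (\<lambda>I. I). h (I - {i}))"
    by (rule sum.Sigma[OF f1]) (use J finite_subset in blast)
  also have "\<dots> = (\<Sum>(I, i)\<in>Sigma ?S0 (\<lambda>I. J - I). h I)"
  proof (rule sum.reindex_bij_witness[where j = "\<lambda>(I, i). (I - {i}, i)" and i = "\<lambda>(I, i). (insert i I, i)"])
    fix a assume "a \<in> Sigma ?S1 (\<lambda>I. I)" then show "(\<lambda>(I, i). (insert i I, i)) ((\<lambda>(I, i). (I - {i}, i)) a) = a" by auto
  next
    fix a assume a: "a \<in> Sigma ?S1 (\<lambda>I. I)"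
    then obtain I i where ai: "a = (I, i)" "I \<subseteq> J" "card I = Suc s" "i \<in> I" by auto
    have "finite I" using ai J finite_subset by blast
    then show "(\<lambda>(I, i). (I - {i}, i)) a \<in> Sigma ?S0 (\<lambda>I. J - I)" using ai by auto
  next
    fix b assume "b \<in> Sigma ?S0 (\<lambda>I. J - I)" then show "(\<lambda>(I, i). (I - {i}, i)) ((\<lambda>(I, i). (insert i I, i)) b) = b" by auto
  next
    fix b assume b: "b \<in> Sigma ?S0 (\<lambda>I. J - I)"
    then obtain I i where bi: "b = (I, i)" "I \<subseteq> J" "card I = s" "i \<in> J" "i \<notin> I" by auto
    have "finite I" using bi J finite_subset by blast
    then show "(\<lambda>(I, i). (insert i I, i)) b \<in> Sigma ?S1 (\<lambda>I. I)" using bi by auto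
  next
    fix a assume "a \<in> Sigma ?S1 (\<lambda>I. I)"
    then show "(\<lambda>(I, i). h I) ((\<lambda>(I, i). (I - {i}, i)) a) = (\<lambda>(I, i). h (I - {i})) a" by auto
  qed
  also have "\<dots> = (\<Sum>I\<in>?S0. \<Sum>i\<in>J - I. h I)"
    by (rule sum.Sigma[OF f0, symmetric]) (use J in blast)
  also have "\<dots> = (\<Sum>I\<in>?S0. real (card J - s) * h I)"
  proof (rule sum.cong)
    fix I assume "I \<in> ?S0"
    then have "card (J - I) = card J - s" using J by (metis (mono_tags, lifting) card_Diff_subset finite_subset mem_Collect_eq)
    then show "(\<Sum>i\<in>J - I. h I) = real (card J - s) * h I" by simp
  qed simp
  also have "\<dots> = real (card J - s) * (\<Sum>I\<in>?S0. h I)" by (simp add: sum_distrib_left)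
  finally show ?thesis .
qed

context cap begin

lemma A_cf: assumes xs: "set xs \<subseteq> Vstar N" and J: "J \<subseteq> {..<length xs}"
  shows "A h (cf xs J) = (\<Sum>j\<in>J. h (cf xs (J - {j})))"
proof -
  have fJ: "finite J" using J finite_subset by blast
  have "(\<Sum>j\<in>J. h (cf xs (J - {j}))) = (\<Sum>j\<in>J. h ((cf xs J)(xs ! j := cf xs J (xs ! j) - 1)))"
    by (rule sum.cong) (use J cf_remove in auto)
  also have "\<dots> = (\<Sum>x\<in>Vstar N. \<Sum>j\<in>{j\<in>J. xs ! j = x}. h ((cf xs J)(xs ! j := cf xs J (xs ! j) - 1)))"
    by (rule sum.group[symmetric]) (use fJ J xs in \<open>auto simp: subset_iff\<close>)
  also have "\<dots> = (\<Sum>x\<in>Vstar N. real (cf xs J x) * h ((cf xs J)(x := cf xs J x - 1)))"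
  proof (rule sum.cong)
    fix x assume "x \<in> Vstar N"
    have "{j\<in>J. xs ! j = x} = {i\<in>J. i < length xs \<and> xs ! i = x}" using J by auto
    then show "(\<Sum>j\<in>{j\<in>J. xs ! j = x}. h ((cf xs J)(xs ! j := cf xs J (xs ! j) - 1)))
        = real (cf xs J x) * h ((cf xs J)(x := cf xs J x - 1))"
      unfolding cf_def by simp
  qed simp
  finally show ?thesis unfolding Aop_def by simp
qed

lemma Ak_cf: assumes xs: "set xs \<subseteq> Vstar N" and J: "J \<subseteq> {..<length xs}"
  shows "k \<le> card J \<Longrightarrow> (A ^^ k) h (cf xs J) = fact k * (\<Sum>I\<in>{I. I \<subseteq> J \<and> card I = card J - k}. h (cf xs I))"
proof (induction k arbitrary: h)
  case 0
  have fJ: "finite J" using J finite_subset by blast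
  have "{I. I \<subseteq> J \<and> card I = card J} = {J}" using fJ card_subset_eq by blast
  then show ?case by simp
next
  case (Suc k)
  have fJ: "finite J" using J finite_subset by blast
  let ?s = "card J - Suc k"
  have s: "card J - k = Suc ?s" using Suc.prems by simp
  have "(A ^^ Suc k) h (cf xs J) = (A ^^ k) (A h) (cf xs J)" by (simp add: funpow_Suc_right del: funpow.simps)
  also have "\<dots> = fact k * (\<Sum>I\<in>{I. I \<subseteq> J \<and> card I = Suc ?s}. A h (cf xs I))"
    using Suc.IH[of "A h"] Suc.prems s by simp
  also have "\<dots> = fact k * (\<Sum>I\<in>{I. I \<subseteq> J \<and> card I = Suc ?s}. \<Sum>i\<in>I. h (cf xs (I - {i})))"
    by (intro arg_cong[where f="(*) (fact k)"] sum.cong refl A_cf[OF xs]) (use J in auto)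
  also have "\<dots> = fact k * (real (card J - ?s) * (\<Sum>I\<in>{I. I \<subseteq> J \<and> card I = ?s}. h (cf xs I)))"
    using double_count[OF fJ, where s = ?s and h = "\<lambda>I. h (cf xs I)"] by simp
  also have "card J - ?s = Suc k" using Suc.prems by simp
  finally show ?case by simp
qed

end


lemma count_replicate: "count_list (replicate n x) y = (if x = y then n else 0)"
  by (induction n) auto

lemma count_concat_rep: "count_list (concat (map (\<lambda>x. replicate (f x) x) [0..<M])) y = (if y < M then f y else 0)"
  by (induction M) (auto simp: count_replicate)

context cap begin

lemma tot_phi: "set xs \<subseteq> Vstar N \<Longrightarrow> tot N (phi xs) = length xs"
  unfolding tot_def phi_def by (rule sum_count_set) simp_all

lemma list_of: assumes x: "\<xi> \<in> Om"
  shows "\<exists>ys. phi ys = \<xi> \<and> set ys \<subseteq> Vstar N \<and> length ys = tot N \<xi>"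
proof -
  define ys where "ys = concat (map (\<lambda>x. replicate (\<xi> x) x) [0..<Suc (Suc N)])"
  have p: "phi ys = \<xi>"
  proof (rule ext)
    fix y
    show "phi ys y = \<xi> y"
      unfolding phi_def ys_def count_concat_rep using x by (auto simp: Omega_def Vstar_def)
  qed
  have s: "set ys \<subseteq> Vstar N" unfolding ys_def by (auto simp: Vstar_def)
  show ?thesis using p s tot_phi[OF s] by auto
qed

abbreviation "gm m \<equiv> (\<lambda>\<xi>::config. if \<xi> 0 = m then 1 else (0::real))"

lemma Ak_g: assumes x: "\<xi> \<in> Om" and n: "tot N \<xi> = n" and m: "m \<le> n"
  shows "(A ^^ (n - m)) (gm m) \<xi> = fact (n - m) * real (\<xi> 0 choose m)"
proof -
  obtain ys where ys: "phi ys = \<xi>" "set ys \<subseteq> Vstar N" "length ys = n" using list_of[OF x] n by auto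
  have xi: "\<xi> = cf ys {..<n}" using phi_cf[of ys] ys by simp
  let ?S = "{I. I \<subseteq> {..<n} \<and> card I = m}"
  define Z where "Z = {i. i < n \<and> ys ! i = 0}"
  have "(A ^^ (n - m)) (gm m) \<xi> = fact (n - m) * (\<Sum>I\<in>?S. gm m (cf ys I))"
    unfolding xi using Ak_cf[OF ys(2), of "{..<n}" "n - m" "gm m"] ys(3) m by simp
  also have "(\<Sum>I\<in>?S. gm m (cf ys I)) = (\<Sum>I\<in>{I\<in>?S. cf ys I 0 = m}. 1)"
    by (rule sum.inter_filter[symmetric]) simp
  also have "{I\<in>?S. cf ys I 0 = m} = {I. I \<subseteq> Z \<and> card I = m}"
  proof (rule set_eqI)
    fix I
    show "I \<in> {I\<in>?S. cf ys I 0 = m} \<longleftrightarrow> I \<in> {I. I \<subseteq> Z \<and> card I = m}"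
    proof
      assume I: "I \<in> {I\<in>?S. cf ys I 0 = m}"
      then have fI: "finite I" using finite_subset by blast
      have "{i\<in>I. i < length ys \<and> ys ! i = 0} = I"
        by (rule card_subset_eq[OF fI]) (use I ys(3) in \<open>auto simp: cf_def\<close>)
      then show "I \<in> {I. I \<subseteq> Z \<and> card I = m}" using I ys(3) unfolding Z_def by auto
    next
      assume I: "I \<in> {I. I \<subseteq> Z \<and> card I = m}"
      then have "{i\<in>I. i < length ys \<and> ys ! i = 0} = I" using ys(3) unfolding Z_def by auto
      then show "I \<in> {I\<in>?S. cf ys I 0 = m}" using I unfolding Z_def cf_def by auto
    qed
  qed
  also have "(\<Sum>I\<in>{I. I \<subseteq> Z \<and> card I = m}. 1::real) = real (card Z choose m)"
    using n_subsets[of Z m] unfolding Z_def by simp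
  also have "card Z = \<xi> 0" unfolding xi Z_def cf_def using ys(3) by (intro arg_cong[where f=card]) auto
  finally show ?thesis .
qed

lemma Lg_nonneg: assumes z: "\<zeta> \<in> Lv m" shows "L (gm m) \<zeta> \<ge> 0"
proof -
  have G: "Lgen c N (gm m) \<zeta> = 0" unfolding Lgen_def
    by (rule sum.neutral) (simp add: glue_def Vbulk_def)
  have H: "Hgen r N (gm m) \<zeta> \<ge> 0" unfolding Hgen_mv
  proof (intro sum_nonneg)
    fix i j assume i: "i \<in> Vbulk N" and j: "j \<in> Vabs N"
    show "r i j * real (\<zeta> i) * (gm m (mv \<zeta> i j) - gm m \<zeta>) \<ge> 0"
    proof (cases "\<zeta> i = 0")
      case False
      have i0: "i \<noteq> 0" using i by (simp add: Vbulk_def)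
      have "(\<Sum>x\<in>{0, i}. \<zeta> x) \<le> tot N \<zeta>" unfolding tot_def
        by (rule sum_mono2) (use Vstar_bulk[OF i] in \<open>auto simp: Vstar_def\<close>)
      then have "\<zeta> 0 + \<zeta> i \<le> m" using z i0 by (simp add: lev_def)
      then have "\<zeta> 0 \<noteq> m" using False by simp
      then show ?thesis using r_nn by simp
    qed simp
  qed
  show ?thesis unfolding Labs_def using G H by simp
qed

end

theorem proposition5p7:
  fixes N n m :: nat and Lam :: "nat set" and c :: "config \<Rightarrow> config \<Rightarrow> real"
    and r :: "nat \<Rightarrow> nat \<Rightarrow> real" and xs :: "nat list"
  assumes "consistent_abs_process N Lam c r"
    and "length xs = n" and "set xs \<subseteq> Vstar N" and "phi xs \<in> Omega N Lam"
    and "m \<in> {1..n-1}"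
  shows "Lim at_top (\<lambda>t. Expect c r N (\<lambda>\<xi>. real (\<xi> 0 choose m)) (phi xs) t)
       = (\<Sum>I\<in>{I. I \<subseteq> {..<n} \<and> card I = m}.
            Lim at_top (\<lambda>t. Prob c r N (\<lambda>\<xi>. \<xi> 0 = m) (phi (nths xs I)) t))"
proof -
  interpret cap N Lam c r by unfold_locales (rule assms(1))
  note len = assms(2) and xsV = assms(3) and xO = assms(4)
  have mn: "m \<le> n" "1 \<le> m" using assms(5) by auto
  let ?S = "{I. I \<subseteq> {..<n} \<and> card I = m}"
  let ?k = "n - m"
  let ?u = "\<lambda>I t. E (gm m) (phi (nths xs I)) t"
  have Prob_eq: "Prob c r N (\<lambda>\<xi>. \<xi> 0 = m) \<eta> t = E (gm m) \<eta> t" for \<eta> t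
    unfolding Prob_def ..
  have totx: "tot N (phi xs) = n" using tot_phi[OF xsV] len by simp
  have sub: "phi (nths xs I) \<in> Lv m" if I: "I \<in> ?S" for I
  proof -
    have sV: "set (nths xs I) \<subseteq> Vstar N" by (rule subset_trans[OF set_nths_subset xsV])
    have e: "{i. i < length xs \<and> i \<in> I} = I" using I len by auto
    have "tot N (phi (nths xs I)) = m" unfolding tot_phi[OF sV] length_nths e using I by simp
    moreover have "phi (nths xs I) \<in> Om"
    proof -
      have le: "cf xs I x \<le> phi xs x" for x
        unfolding phi_cf cf_def using len by (intro card_mono) auto
      have z: "cf xs I x = 0" if "x \<notin> Vstar N" for x
      proof -
        have "cf xs I x \<le> phi xs x" by (rule le)
        moreover have "phi xs x = 0" using xO that by (simp add: Omega_def)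
        ultimately show ?thesis by simp
      qed
      have b: "cf xs I x \<in> Lam" if "x \<in> Vbulk N" for x
      proof -
        have "phi xs x \<in> Lam" using xO that by (simp add: Omega_def)
        then show ?thesis by (rule Lam_down[OF _ le])
      qed
      show ?thesis unfolding phi_nths Omega_def mem_Collect_eq using z b by blast
    qed
    ultimately show ?thesis by (simp add: lev_def)
  qed
  have conv_I: "(?u I \<longlongrightarrow> Lim at_top (?u I)) at_top" if I: "I \<in> ?S" for I
  proof -
    have h1: "\<And>\<zeta>. \<zeta> \<in> Lv m \<Longrightarrow> gm m \<zeta> \<ge> 0 \<and> gm m \<zeta> \<le> 1" by simp
    have "\<exists>l. (?u I \<longlongrightarrow> l) at_top"
      by (rule conv[OF sub[OF I]]) (simp_all add: Lg_nonneg)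
    then obtain l where l: "(?u I \<longlongrightarrow> l) at_top" by blast
    then show ?thesis using tendsto_Lim[OF trivial_limit_at_top_linorder l] by simp
  qed
  have ident: "E (\<lambda>\<xi>. real (\<xi> 0 choose m)) (phi xs) t = (\<Sum>I\<in>?S. ?u I t)" for t
  proof -
    have "fact ?k * E (\<lambda>\<xi>. real (\<xi> 0 choose m)) (phi xs) t
        = E (\<lambda>\<xi>. fact ?k * real (\<xi> 0 choose m) + 0) (phi xs) t"
      using E_lin[OF xO, of "fact ?k" "\<lambda>\<xi>. real (\<xi> 0 choose m)" "\<lambda>_. 0" t] E_const by simp
    also have "\<dots> = E ((A ^^ ?k) (gm m)) (phi xs) t"
    proof (rule E_local[OF Om_lev[OF xO]])
      fix \<zeta> assume z: "\<zeta> \<in> Lv (tot N (phi xs))"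
      have zo: "\<zeta> \<in> Om" and zt: "tot N \<zeta> = n" using z totx by (simp_all add: lev_def)
      show "fact ?k * real (\<zeta> 0 choose m) + 0 = (A ^^ ?k) (gm m) \<zeta>"
        using Ak_g[OF zo zt mn(1)] by simp
    qed
    also have "\<dots> = (A ^^ ?k) (\<lambda>\<xi>. E (gm m) \<xi> t) (phi xs)"
      using E_Ak[of ?k "gm m" t] xO by blast
    also have "\<dots> = (A ^^ ?k) (\<lambda>\<xi>. E (gm m) \<xi> t) (cf xs {..<length xs})"
      by (simp only: phi_cf)
    also have "\<dots> = fact ?k * (\<Sum>I\<in>?S. E (gm m) (cf xs I) t)"
      using Ak_cf[OF xsV, of "{..<length xs}" ?k "\<lambda>\<xi>. E (gm m) \<xi> t"] len mn by simp
    also have "\<dots> = fact ?k * (\<Sum>I\<in>?S. ?u I t)" by (simp add: phi_nths)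
    finally show ?thesis by simp
  qed
  have "((\<lambda>t. E (\<lambda>\<xi>. real (\<xi> 0 choose m)) (phi xs) t) \<longlongrightarrow> (\<Sum>I\<in>?S. Lim at_top (?u I))) at_top"
    unfolding ident by (rule tendsto_sum) (rule conv_I)
  then have "Lim at_top (\<lambda>t. E (\<lambda>\<xi>. real (\<xi> 0 choose m)) (phi xs) t) = (\<Sum>I\<in>?S. Lim at_top (?u I))"
    by (rule tendsto_Lim[OF trivial_limit_at_top_linorder])
  then show ?thesis unfolding Prob_eq .
qed

end
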